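(* Let $p$ be prime and let $V<W\le\mathbb F_p^k$ be subspaces with $\dim W=\dim V+1$. Let $v\in V^\perp\setminus W^\perp$ be an element of minimum Hamming weight in $V^\perp\setminus W^\perp$, and let $S=\mathrm{Supp}(v)$. Then $\pi_S(V)=\langle\pi_S(v)\rangle^\perp$, where the orthogonal complement is taken in $\mathbb F_p^S$.
   Context: For $x\in\mathbb F_p^k$, $\mathrm{Supp}(x)=\{i:x_i\ne0\}$, and its Hamming weight is $|\mathrm{Supp}(x)|$. $\pi_S:\mathbb F_p^k\to\mathbb F_p^S$ is the coordinate projection. $\perp$ denotes the orthogonal complement under the standard dot product. *)

theory Defs
  imports "HOL-Analysis.Analysis"
begin

text \<open>Vectors in F_p^k are modelled as 'a ^ 'n, where 'a is a field with p elements
  (i.e. F_p) and k = CARD('n).\<close>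

definition dotp :: "'a::field ^ 'n \<Rightarrow> 'a ^ 'n \<Rightarrow> 'a" where
  "dotp x y = (\<Sum>i\<in>UNIV. x $ i * y $ i)"

definition orth :: "('a::field ^ 'n) set \<Rightarrow> ('a ^ 'n) set" where
  "orth V = {x. \<forall>y\<in>V. dotp x y = 0}"

definition Supp :: "'a::zero ^ 'n \<Rightarrow> 'n set" where
  "Supp x = {i. x $ i \<noteq> 0}"

definition hweight :: "'a::zero ^ 'n \<Rightarrow> nat" where
  "hweight x = card (Supp x)"

text \<open>F_p^S is identified with the vectors of 'a ^ 'n vanishing outside S;
  the projection pi_S zeroes the coordinates outside S.\<close>

definition coord_space :: "'n set \<Rightarrow> ('a::zero ^ 'n) set" where
  "coord_space S = {y. \<forall>i. i \<notin> S \<longrightarrow> y $ i = 0}"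

definition proj :: "'n set \<Rightarrow> 'a::zero ^ 'n \<Rightarrow> 'a ^ 'n" where
  "proj S x = (\<chi> i. if i \<in> S then x $ i else 0)"

definition orth_in :: "'n set \<Rightarrow> ('a::field ^ 'n) set \<Rightarrow> ('a ^ 'n) set" where
  "orth_in S A = {y \<in> coord_space S. \<forall>a\<in>A. (\<Sum>i\<in>S. y $ i * a $ i) = 0}"

end

theory Submission
  imports Defs
begin

lemma dotp_add: "dotp (x + y) z = dotp x z + dotp y (z::'a::field^'n)"
  by (simp add: dotp_def sum.distrib distrib_right)

lemma dotp_scale: "dotp (c *s x) z = c * dotp x (z::'a::field^'n)"
  by (simp add: dotp_def sum_distrib_left mult.assoc)

lemma dotp_diff: "dotp (x - y) z = dotp x z - dotp y (z::'a::field^'n)"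
  by (simp add: dotp_def sum_subtractf left_diff_distrib)

lemma orth_add: "x \<in> orth A \<Longrightarrow> y \<in> orth A \<Longrightarrow> x + y \<in> orth A"
  by (simp add: orth_def dotp_add)

lemma orth_scale: "x \<in> orth A \<Longrightarrow> c *s x \<in> orth A"
  by (simp add: orth_def dotp_scale)

lemma orth_diff: "x \<in> orth A \<Longrightarrow> y \<in> orth A \<Longrightarrow> x - y \<in> orth A"
  by (simp add: orth_def dotp_diff)

lemma orth_zero: "0 \<in> orth A"
  by (simp add: orth_def dotp_def)

lemma separation:
  fixes y :: "'a::field ^ 'n"
  assumes "y \<notin> vec.span U"
  shows "\<exists>x. (\<forall>z\<in>vec.span U. dotp x z = 0) \<and> dotp x y \<noteq> 0"
proof -
  obtain B where B: "B \<subseteq> vec.span U" "vec.independent B" "vec.span U \<subseteq> vec.span B"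
    "card B = vec.dim (vec.span U)"
    by (rule vec.basis_exists)
  have "vec.span B \<subseteq> vec.span U" by (rule vec.span_minimal[OF B(1) vec.subspace_span])
  then have yB: "y \<notin> vec.span B" using assms by blast
  have yB': "y \<notin> B" using yB vec.span_base[of y B] by blast
  have ind: "vec.independent (insert y B)"
    using B(2) yB yB' by (simp add: vec.independent_insert)
  define c :: "'a^'n" where "c = (\<chi> i. 1)"
  define f where "f = vec.construct (insert y B) (\<lambda>b. if b = y then c else 0)"
  have lf: "Vector_Spaces.linear (*s) (*s) f"
    unfolding f_def by (rule vec.linear_construct[OF ind])
  have fy: "f y = c" unfolding f_def using vec.construct_basis[OF ind, of y "\<lambda>b. if b = y then c else 0"] by simp
  have fB: "f b = 0" if bB: "b \<in> B" for b
  proof -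
    have "b \<noteq> y" using bB yB' by blast
    then show ?thesis unfolding f_def using vec.construct_basis[OF ind, of b "\<lambda>b. if b = y then c else 0"] bB by simp
  qed
  have fU: "\<And>z. z \<in> vec.span U \<Longrightarrow> f z = 0"
    using vec.linear_eq_0_on_span[OF lf fB] B(3) by blast
  obtain j :: 'n where True by simp
  define x where "x = matrix f $ j"
  have dx: "dotp x z = f z $ j" for z
  proof -
    have "f z $ j = (matrix f *v z) $ j" by (simp add: matrix_works[OF lf])
    also have "\<dots> = dotp x z" by (simp add: matrix_vector_mult_def dotp_def x_def)
    finally show ?thesis by simp
  qed
  show ?thesis
    by (rule exI[of _ x]) (simp add: dx fU fy c_def)
qed

lemma sum_supp:
  fixes v x :: "'a::field ^ 'n"
  shows "dotp v x = (\<Sum>i\<in>Supp v. x $ i * v $ i)"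
  unfolding dotp_def Supp_def
  by (auto intro!: sum.mono_neutral_cong_right simp: mult.commute)

theorem corollary7p4:
  fixes p :: nat
    and V W :: "('a::{field,finite} ^ 'n) set"
    and v :: "'a ^ 'n"
  assumes "prime p" and "CARD('a) = p"
    and "vec.subspace V" and "vec.subspace W" and "V \<subset> W"
    and "vec.dim W = vec.dim V + 1"
    and "v \<in> orth V - orth W"
    and "\<forall>u \<in> orth V - orth W. hweight v \<le> hweight u"
  shows "proj (Supp v) ` V = orth_in (Supp v) (vec.span {proj (Supp v) v})"
proof -
  define S where "S = Supp v"
  have pv: "proj S v = v"
    by (simp add: proj_def S_def Supp_def vec_eq_iff)
  have vV: "v \<in> orth V" and vW: "v \<notin> orth W" using assms(7) by auto
  have v0: "v \<noteq> 0" using vW orth_zero by metis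
  have finS: "finite S" by simp
  have hw: "hweight v = card S" by (simp add: hweight_def S_def)
  have small: "u \<in> orth W" if "u \<in> orth V" "Supp u \<subseteq> S - {j}" "j \<in> S" for u j
  proof (rule ccontr)
    assume "u \<notin> orth W"
    then have "hweight v \<le> hweight u" using assms(8) that(1) by auto
    moreover have "card (Supp u) < card S"
      by (rule psubset_card_mono[OF finS]) (use that(2,3) in blast)
    ultimately show False by (simp add: S_def hweight_def)
  qed
  have key: "\<exists>c. u = c *s v" if uV: "u \<in> orth V" and uS: "Supp u \<subseteq> S" for u
  proof -
    obtain i where iS: "i \<in> S" using v0 by (auto simp: S_def Supp_def vec_eq_iff)
    have vi: "v $ i \<noteq> 0" using iS by (simp add: S_def Supp_def)
    define u' where "u' = u - (u $ i / v $ i) *s v"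
    have u'V: "u' \<in> orth V" unfolding u'_def by (intro orth_diff orth_scale uV vV)
    have u'S: "Supp u' \<subseteq> S - {i}"
      using uS vi by (auto simp: u'_def Supp_def S_def)
    show ?thesis
    proof (cases "u' = 0")
      case True then show ?thesis unfolding u'_def by (metis eq_iff_diff_eq_0)
    next
      case False
      then obtain j where j: "u' $ j \<noteq> 0" by (auto simp: vec_eq_iff)
      have jS: "j \<in> S" using j u'S by (auto simp: Supp_def)
      have u'W: "u' \<in> orth W" using small[OF u'V u'S iS] .
      define t where "t = - (v $ j / u' $ j)"
      define w where "w = v + t *s u'"
      have wV: "w \<in> orth V" unfolding w_def by (intro orth_add orth_scale vV u'V)
      have wW: "w \<notin> orth W"
      proof
        assume "w \<in> orth W"
        then have "w - t *s u' \<in> orth W" by (intro orth_diff orth_scale u'W)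
        then show False using vW by (simp add: w_def)
      qed
      have "Supp w \<subseteq> S - {j}"
        using u'S j by (auto simp: w_def t_def Supp_def S_def)
      then have "w \<in> orth W" using small[OF wV _ jS] by blast
      then show ?thesis using wW by blast
    qed
  qed
  let ?U = "proj S ` V"
  have projadd: "proj S (a + b) = proj S a + proj S b" for a b :: "'a^'n"
    by (simp add: proj_def vec_eq_iff)
  have projscale: "proj S (c *s a) = c *s proj S a" for c and a :: "'a^'n"
    by (simp add: proj_def vec_eq_iff)
  have subU: "vec.subspace ?U"
    unfolding vec.subspace_def
  proof (intro conjI ballI allI)
    show "0 \<in> ?U" using assms(3) vec.subspace_0
      by (metis (no_types, lifting) image_eqI projscale scale_zero_left vector_smult_lzero)
  next
    fix a b assume "a \<in> ?U" "b \<in> ?U"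
    then obtain a' b' where "a' \<in> V" "b' \<in> V" "a = proj S a'" "b = proj S b'" by blast
    then show "a + b \<in> ?U" using assms(3) vec.subspace_add[of V a' b'] projadd[of a' b'] rev_image_eqI[of "a'+b'" V "a+b" "proj S"] by simp
  next
    fix c a assume "a \<in> ?U"
    then obtain a' where "a' \<in> V" "a = proj S a'" by blast
    then show "c *s a \<in> ?U" using assms(3) vec.subspace_scale[of V a' c] projscale[of c a'] rev_image_eqI[of "c *s a'" V "c *s a" "proj S"] by simp
  qed
  have dproj: "dotp x (proj S w) = dotp (proj S x) w" for x w :: "'a^'n"
    unfolding dotp_def proj_def by (intro sum.cong) auto
  have "?U = orth_in S (vec.span {v})"
  proof
    show "?U \<subseteq> orth_in S (vec.span {v})"
    proof
      fix y assume "y \<in> ?U"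
      then obtain x where x: "x \<in> V" "y = proj S x" by blast
      have "dotp v x = 0" using vV x(1) by (simp add: orth_def)
      then have s0: "(\<Sum>i\<in>S. x $ i * v $ i) = 0" using sum_supp S_def by metis
      have "(\<Sum>i\<in>S. y $ i * a $ i) = 0" if aS: "a \<in> vec.span {v}" for a
      proof -
        obtain k where "a = k *s v" using aS vec.span_singleton by auto
        then have "(\<Sum>i\<in>S. y $ i * a $ i) = k * (\<Sum>i\<in>S. x $ i * v $ i)"
          by (simp add: x(2) proj_def sum_distrib_left mult_ac)
        then show ?thesis using s0 by simp
      qed
      moreover have "y \<in> coord_space S" by (simp add: x(2) coord_space_def proj_def)
      ultimately show "y \<in> orth_in S (vec.span {v})" by (simp add: orth_in_def)
    qed
  next
    show "orth_in S (vec.span {v}) \<subseteq> ?U"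
    proof
      fix y assume yT: "y \<in> orth_in S (vec.span {v})"
      show "y \<in> ?U"
      proof (rule ccontr)
        assume "y \<notin> ?U"
        then have "y \<notin> vec.span ?U" using vec.span_eq_iff subU by blast
        then obtain x where x: "\<forall>z\<in>vec.span ?U. dotp x z = 0" "dotp x y \<noteq> 0"
          using separation by blast
        define u where "u = proj S x"
        have uV: "u \<in> orth V"
          unfolding orth_def u_def
        proof (intro CollectI ballI)
          fix w assume "w \<in> V"
          then have "proj S w \<in> vec.span ?U" by (simp add: vec.span_base)
          then show "dotp (proj S x) w = 0" using x(1) dproj by metis
        qed
        have "Supp u \<subseteq> S" by (auto simp: u_def proj_def Supp_def)
        then obtain c where c: "u = c *s v" using key uV by blast
        have yc: "y \<in> coord_space S" and yv: "(\<Sum>i\<in>S. y $ i * v $ i) = 0"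
          using yT vec.span_base[of v "{v}"] by (auto simp: orth_in_def)
        have "proj S y = y" using yc by (simp add: coord_space_def proj_def vec_eq_iff)
        then have "dotp x y = dotp u y" using dproj u_def by metis
        also have "\<dots> = c * (\<Sum>i\<in>S. y $ i * v $ i)"
          unfolding c dotp_scale by (simp only: sum_supp S_def)
        finally show False using x(2) yv by simp
      qed
    qed
  qed
  with pv show ?thesis unfolding S_def by simp
qed

end
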